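(* Let $r\ge1$ and let $\sigma=(1,1,\ldots,1)$ be the partition of $r$ into $r$ parts equal to $1$. Let $H=H(n,r,q\mid\sigma)$ with $n\ge(r+1)^2$ and $q\ge r$. Then $H$ has a maximum matching leaving exactly $p$ vertices unmatched, where $p$ is the remainder of $nq$ upon division by $r$; hence $\nu(H)=\left\lfloor\frac{nq}{r}\right\rfloor$.
   Context: A $\sigma$-hypergraph $H=H(n,r,q\mid\sigma)$, for a partition $\sigma$ of $r$, is the $r$-uniform hypergraph whose vertex set is the disjoint union of $n$ classes $V_1,\ldots,V_n$, each of size $q$; an $r$-subset $K$ of vertices is an edge iff the multiset of non-zero values $|K\cap V_i|$ equals $\sigma$ (so for $\sigma=(1,\ldots,1)$ the edges are the $r$-sets meeting $r$ distinct classes in one vertex each). A matching is a set of pairwise vertex-disjoint edges; $\nu(H)$ is the maximum size of a matching. *)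

theory Defs
  imports Main "HOL-Library.Multiset"
begin

text \<open>Vertices of H(n,r,q|sigma): pairs (i,j), i<n the class index, j<q the position
 inside class V_i.\<close>
definition sh_vertices :: "nat \<Rightarrow> nat \<Rightarrow> (nat \<times> nat) set" where
  "sh_vertices n q = {0..<n} \<times> {0..<q}"

definition sh_class :: "nat \<Rightarrow> nat \<Rightarrow> (nat \<times> nat) set" where
  "sh_class q i = {i} \<times> {0..<q}"

definition sh_profile :: "nat \<Rightarrow> nat \<Rightarrow> (nat \<times> nat) set \<Rightarrow> nat multiset" where
  "sh_profile n q K =
     filter_mset (\<lambda>x. x \<noteq> 0) (image_mset (\<lambda>i. card (K \<inter> sh_class q i)) (mset_set {0..<n}))"

text \<open>Edges of the sigma-hypergraph H(n,r,q|sigma), sigma a partition of r given as a multiset.\<close>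
definition sh_edges :: "nat \<Rightarrow> nat \<Rightarrow> nat \<Rightarrow> nat multiset \<Rightarrow> (nat \<times> nat) set set" where
  "sh_edges n r q \<sigma> =
     {K. K \<subseteq> sh_vertices n q \<and> card K = r \<and> sh_profile n q K = \<sigma>}"

definition is_matching :: "'v set set \<Rightarrow> 'v set set \<Rightarrow> bool" where
  "is_matching E M \<longleftrightarrow> M \<subseteq> E \<and> (\<forall>e\<in>M. \<forall>f\<in>M. e \<noteq> f \<longrightarrow> e \<inter> f = {})"

text \<open>Matching number (for finite hypergraphs).\<close>
definition matching_number :: "'v set set \<Rightarrow> nat" where
  "matching_number E = Max {card M | M. is_matching E M}"

end

theory Submission
  imports Defs
begin

lemma profile_ones:
  assumes K: "K \<subseteq> sh_vertices n q" and inj: "inj_on fst K" and c: "card K = r"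
  shows "sh_profile n q K = replicate_mset r 1"
proof -
  have finK: "finite K" using K finite_subset unfolding sh_vertices_def by blast
  let ?g = "\<lambda>i. card (K \<inter> sh_class q i)"
  have g: "?g i = (if i \<in> fst ` K then 1 else 0)" for i
  proof (cases "i \<in> fst ` K")
    case True
    then obtain x where x: "x \<in> K" "fst x = i" by auto
    have "K \<inter> sh_class q i = {x}"
    proof
      show "K \<inter> sh_class q i \<subseteq> {x}"
      proof
        fix y assume "y \<in> K \<inter> sh_class q i"
        then have "y \<in> K" "fst y = i" unfolding sh_class_def by auto
        then show "y \<in> {x}" using inj x unfolding inj_on_def by auto
      qed
      show "{x} \<subseteq> K \<inter> sh_class q i" using x K
        unfolding sh_class_def sh_vertices_def by (cases x) auto
    qed
    then show ?thesis using True by simp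
  next
    case False
    then have "K \<inter> sh_class q i = {}" unfolding sh_class_def by force
    then show ?thesis using False by simp
  qed
  have S: "{i \<in> {0..<n}. ?g i \<noteq> 0} = fst ` K"
    using K g unfolding sh_vertices_def by (auto split: if_splits)
  have "sh_profile n q K = image_mset ?g (mset_set (fst ` K))"
    unfolding sh_profile_def filter_mset_image_mset using S by simp
  also have "\<dots> = image_mset (\<lambda>_. 1) (mset_set (fst ` K))"
    by (rule image_mset_cong) (simp add: g finK)
  also have "\<dots> = replicate_mset (card (fst ` K)) 1"
    using finK by (simp add: image_mset_const_eq)
  also have "card (fst ` K) = r" using card_image[OF inj] c by simp
  finally show ?thesis .
qed

lemma matching_props:
  assumes "is_matching (sh_edges n r q \<sigma>) M"
  shows "finite M" "card (\<Union>M) = r * card M" "\<Union>M \<subseteq> sh_vertices n q"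
proof -
  have sub: "M \<subseteq> sh_edges n r q \<sigma>" and dis: "\<forall>e\<in>M. \<forall>f\<in>M. e \<noteq> f \<longrightarrow> e \<inter> f = {}"
    using assms unfolding is_matching_def by auto
  have fV: "finite (sh_vertices n q)" unfolding sh_vertices_def by simp
  have "M \<subseteq> Pow (sh_vertices n q)" using sub unfolding sh_edges_def by auto
  then show fM: "finite M" using fV finite_subset by blast
  show U: "\<Union>M \<subseteq> sh_vertices n q" using sub unfolding sh_edges_def by auto
  have "card (\<Union>M) = sum card M"
  proof (rule card_Union_disjoint)
    show "pairwise disjnt M" using dis by (auto simp: pairwise_def disjnt_def)
    fix A assume "A \<in> M"
    then have "A \<subseteq> sh_vertices n q" using U by auto
    then show "finite A" using fV finite_subset by blast
  qed
  also have "\<dots> = sum (\<lambda>_. r) M"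
    by (rule sum.cong) (use sub in \<open>auto simp: sh_edges_def\<close>)
  finally show "card (\<Union>M) = r * card M" by simp
qed

lemma mod_inj_interval:
  fixes n r a t t' :: nat
  assumes "r \<le> n" "t \<in> {a..<a+r}" "t' \<in> {a..<a+r}" "t mod n = t' mod n"
  shows "t = t'"
proof (rule ccontr)
  assume ne: "t \<noteq> t'"
  { fix x y :: nat assume "x < y" "y < x + n" "x mod n = y mod n"
    then have False
    proof -
      assume a: "x < y" "y < x + n" "x mod n = y mod n"
      have "n dvd y - x" using a mod_eq_dvd_iff_nat[of x y n] by auto
      then have "n \<le> y - x" using a dvd_imp_le by auto
      then show False using a by auto
    qed }
  note * = this
  show False
  proof (cases "t < t'")
    case True then show ?thesis using * [of t t'] assms by auto
  next
    case False then have "t' < t" using ne by auto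
    then show ?thesis using * [of t' t] assms by auto
  qed
qed

theorem lemma3p6:
  fixes n r q :: nat
  assumes "r \<ge> 1" and "n \<ge> (r + 1)^2" and "q \<ge> r"
  defines "E \<equiv> sh_edges n r q (replicate_mset r 1)"
  shows "(\<exists>M. is_matching E M \<and> card M = matching_number E
            \<and> card (sh_vertices n q - \<Union>M) = (n * q) mod r)
         \<and> matching_number E = (n * q) div r"
proof -
  have n0: "n > 0" and rn: "r \<le> n" using assms(1,2) by (auto simp: power2_eq_square)
  define f where "f t = (t mod n, t div n)" for t
  define ed where "ed k = f ` {k*r..<k*r+r}" for k
  define N where "N = n * q div r"
  define M0 where "M0 = ed ` {0..<N}"
  have injf: "inj f" unfolding f_def inj_def
    by (metis div_mult_mod_eq prod.inject)
  have fV: "t < n*q \<Longrightarrow> f t \<in> sh_vertices n q" for t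
    unfolding f_def sh_vertices_def using n0
    by (auto simp: less_mult_imp_div_less mult.commute)
  have NR: "k < N \<Longrightarrow> k*r + r \<le> n*q" for k
  proof -
    assume "k < N"
    then have "Suc k * r \<le> N * r" by (intro mult_le_mono1) simp
    also have "\<dots> \<le> n*q" unfolding N_def by simp
    finally show ?thesis by simp
  qed
  have edE: "ed k \<in> E" if k: "k < N" for k
  proof -
    have sub: "ed k \<subseteq> sh_vertices n q" unfolding ed_def using fV NR[OF k] by auto
    have c: "card (ed k) = r" unfolding ed_def
      by (subst card_image) (auto intro: inj_on_subset[OF injf])
    have i: "inj_on fst (ed k)" unfolding ed_def
    proof (rule inj_onI)
      fix u v assume u: "u \<in> f ` {k*r..<k*r+r}" and v: "v \<in> f ` {k*r..<k*r+r}" and e: "fst u = fst v"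
      from u obtain x where x: "x \<in> {k*r..<k*r+r}" "u = f x" by blast
      from v obtain y where y: "y \<in> {k*r..<k*r+r}" "v = f y" by blast
      have "x mod n = y mod n" using e x y by (simp add: f_def)
      then have "x = y" using mod_inj_interval[OF rn, of x "k*r" y] x y by simp
      then show "u = v" using x y by simp
    qed
    show ?thesis unfolding E_def sh_edges_def using sub c profile_ones[OF sub i c] by auto
  qed
  have disj: "k \<noteq> k' \<Longrightarrow> ed k \<inter> ed k' = {}" for k k'
  proof -
    assume ne: "k \<noteq> k'"
    have "{k*r..<k*r+r} \<inter> {k'*r..<k'*r+r} = {}"
    proof (cases "k < k'")
      case True
      then have "k*r + r \<le> k'*r" by (metis mult_Suc add.commute Suc_leI mult_le_mono1)
      then show ?thesis by auto
    next
      case False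
      then have "k' < k" using ne by auto
      then have "k'*r + r \<le> k*r" by (metis mult_Suc add.commute Suc_leI mult_le_mono1)
      then show ?thesis by auto
    qed
    then show ?thesis unfolding ed_def using injf
      by (metis image_Int image_empty inj_on_subset subset_UNIV)
  qed
  have edne: "ed k \<noteq> {}" for k unfolding ed_def using assms(1) by auto
  have injed: "inj_on ed {0..<N}" unfolding inj_on_def using disj edne by blast
  have mM0: "is_matching E M0" unfolding is_matching_def M0_def using edE disj by (metis (no_types, lifting) atLeastLessThan_iff image_iff image_subsetI)
  have cM0: "card M0 = N" unfolding M0_def using card_image[OF injed] by simp
  have bound: "card M \<le> N" if m: "is_matching E M" for M
  proof -
    have "r * card M = card (\<Union>M)" using matching_props(2)[OF m[unfolded E_def]] by simp
    also have "\<dots> \<le> card (sh_vertices n q)"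
      using matching_props(3)[OF m[unfolded E_def]] by (rule card_mono[rotated]) (simp add: sh_vertices_def)
    also have "\<dots> = n*q" by (simp add: sh_vertices_def)
    finally have "r * card M \<le> n*q" .
    then show ?thesis unfolding N_def using assms(1)
      by (metis div_le_mono nonzero_mult_div_cancel_left not_one_le_zero)
  qed
  have mn: "matching_number E = N"
    unfolding matching_number_def
  proof (rule Max_eqI)
    show "finite {card M |M. is_matching E M}"
      by (rule finite_subset[of _ "{0..N}"]) (auto dest: bound)
    show "\<And>y. y \<in> {card M |M. is_matching E M} \<Longrightarrow> y \<le> N" using bound by auto
    show "N \<in> {card M |M. is_matching E M}" using mM0 cM0 by auto
  qed
  have "card (sh_vertices n q - \<Union>M0) = n*q - r*N"
  proof -
    have U: "\<Union>M0 \<subseteq> sh_vertices n q" "card (\<Union>M0) = r * N"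
      using matching_props[OF mM0[unfolded E_def]] cM0 by auto
    have fU: "finite (\<Union>M0)" by (rule finite_subset[OF U(1)]) (simp add: sh_vertices_def)
    show ?thesis using card_Diff_subset[OF fU U(1)] U(2) by (simp add: sh_vertices_def)
  qed
  also have "\<dots> = n*q mod r" unfolding N_def by (simp add: minus_mult_div_eq_mod)
  finally show ?thesis using mM0 cM0 mn unfolding N_def by auto
qed

end
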